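(* Let $G$ be a finite non-abelian group, $g\in G$, and let $\mathfrak{M}_g$ be the set of maximal subgroups $M$ of $G$ with $g^G\cap M\neq\emptyset$. Assume that for every $M\in\mathfrak{M}_g$ there exists $m\in M$ such that $g^G\cap M\subseteq m^M\subseteq g^G$. If $g^G$ is of type D, then there exist $N\in\mathfrak{M}_g$ and $n\in N$ such that $n^N$ is of type D.
   Context: For $h$ in a group $H$, $h^H$ denotes the conjugacy class of $h$ in $H$. A conjugacy class $\mathcal{O}$ of a group (regarded as a rack with $x\triangleright y=xyx^{-1}$) is of type D iff there exist $r,s\in\mathcal{O}$ with $(rs)^2\neq(sr)^2$ such that $r$ and $s$ are not conjugate in the subgroup $\langle r,s\rangle$. (In rack terms: a rack is of type D if it contains a subrack that is a disjoint union $R\sqcup S$ of two subracks with $r\triangleright(s\triangleright(r\triangleright s))\neq s$ for some $r\in R$, $s\in S$.) *)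

theory Defs
  imports "HOL-Algebra.Algebra"
begin

definition conj_class :: "('a, 'b) monoid_scheme \<Rightarrow> 'a set \<Rightarrow> 'a \<Rightarrow> 'a set" where
  "conj_class G H h = {x \<otimes>\<^bsub>G\<^esub> h \<otimes>\<^bsub>G\<^esub> inv\<^bsub>G\<^esub> x | x. x \<in> H}"

definition maximal_subgroup :: "'a set \<Rightarrow> ('a, 'b) monoid_scheme \<Rightarrow> bool" where
  "maximal_subgroup M G \<longleftrightarrow> subgroup M G \<and> M \<noteq> carrier G \<and>
     (\<forall>H. subgroup H G \<and> M \<subseteq> H \<longrightarrow> H = M \<or> H = carrier G)"

definition type_D :: "('a, 'b) monoid_scheme \<Rightarrow> 'a set \<Rightarrow> bool" where
  "type_D G C \<longleftrightarrow> (\<exists>r\<in>C. \<exists>s\<in>C.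
     (r \<otimes>\<^bsub>G\<^esub> s) \<otimes>\<^bsub>G\<^esub> (r \<otimes>\<^bsub>G\<^esub> s) \<noteq> (s \<otimes>\<^bsub>G\<^esub> r) \<otimes>\<^bsub>G\<^esub> (s \<otimes>\<^bsub>G\<^esub> r) \<and>
     s \<notin> conj_class G (generate G {r, s}) r)"

end

theory Submission
  imports Defs
begin

lemma conj_trans_aux:
  fixes G (structure)
  assumes "group G" "y \<in> carrier G" "z \<in> carrier G" "g \<in> carrier G"
  shows "(z \<otimes>\<^bsub>G\<^esub> inv\<^bsub>G\<^esub> y) \<otimes>\<^bsub>G\<^esub> (y \<otimes>\<^bsub>G\<^esub> g \<otimes>\<^bsub>G\<^esub> inv\<^bsub>G\<^esub> y) \<otimes>\<^bsub>G\<^esub> inv\<^bsub>G\<^esub> (z \<otimes>\<^bsub>G\<^esub> inv\<^bsub>G\<^esub> y)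
         = z \<otimes>\<^bsub>G\<^esub> g \<otimes>\<^bsub>G\<^esub> inv\<^bsub>G\<^esub> z"
proof -
  interpret group G by fact
  have "inv (z \<otimes> inv y) = y \<otimes> inv z" using assms by (simp add: inv_mult_group)
  moreover have c: "\<And>w. w \<in> carrier G \<Longrightarrow> inv y \<otimes> (y \<otimes> w) = w"
    using assms by (simp add: m_assoc[symmetric])
  ultimately show ?thesis using assms by (simp add: m_assoc c)
qed

lemma exists_maximal:
  assumes "group G" "finite (carrier G)" "subgroup H G" "H \<noteq> carrier G"
  shows "\<exists>M. maximal_subgroup M G \<and> H \<subseteq> M"
proof -
  define S where "S = {K. subgroup K G \<and> H \<subseteq> K \<and> K \<noteq> carrier G}"
  have "S \<subseteq> Pow (carrier G)" unfolding S_def using subgroup.subset by blast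
  then have fS: "finite S" by (rule finite_subset) (simp add: assms(2))
  have HS: "H \<in> S" using assms S_def by auto
  define n where "n = Max (card ` S)"
  have "n \<in> card ` S" unfolding n_def using fS HS by (intro Max_in) auto
  then obtain K where KS: "K \<in> S" and cK: "card K = n" by auto
  have ge: "\<And>K'. K' \<in> S \<Longrightarrow> card K' \<le> card K"
  proof -
    fix K' assume "K' \<in> S"
    then have "card K' \<le> Max (card ` S)" using fS by (intro Max_ge) auto
    then show "card K' \<le> card K" using cK n_def by simp
  qed
  have "maximal_subgroup K G"
    unfolding maximal_subgroup_def
  proof (intro conjI allI impI)
    show "subgroup K G" "K \<noteq> carrier G" using KS S_def by auto
  next
    fix H' assume h: "subgroup H' G \<and> K \<subseteq> H'"
    show "H' = K \<or> H' = carrier G"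
    proof (cases "H' = carrier G")
      case False
      then have "H' \<in> S" using h KS S_def by auto
      then have "card H' \<le> card K" by (rule ge)
      moreover have "finite H'" using h assms(2) finite_subset[OF subgroup.subset[of H' G]] by blast
      moreover have "card K \<le> card H'" using h card_mono[OF \<open>finite H'\<close>] by blast
      ultimately have "K = H'" using h card_subset_eq[of H' K] by simp
      then show ?thesis by simp
    qed simp
  qed
  then show ?thesis using KS S_def by auto
qed

theorem lemma2p4:
  fixes G (structure) and g
  assumes "group G" and "finite (carrier G)"
    and "\<not> comm_group G"
    and "g \<in> carrier G"
    and "\<forall>M. maximal_subgroup M G \<and> conj_class G (carrier G) g \<inter> M \<noteq> {} \<longrightarrow>
           (\<exists>m\<in>M. conj_class G (carrier G) g \<inter> M \<subseteq> conj_class G M m \<and>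
                   conj_class G M m \<subseteq> conj_class G (carrier G) g)"
    and "type_D G (conj_class G (carrier G) g)"
  shows "\<exists>N n. maximal_subgroup N G \<and> conj_class G (carrier G) g \<inter> N \<noteq> {} \<and>
           n \<in> N \<and> type_D G (conj_class G N n)"
proof -
  interpret group G by fact
  let ?C = "conj_class G (carrier G) g"
  obtain r s where r: "r \<in> ?C" and s: "s \<in> ?C"
    and ne: "(r \<otimes> s) \<otimes> (r \<otimes> s) \<noteq> (s \<otimes> r) \<otimes> (s \<otimes> r)"
    and nc: "s \<notin> conj_class G (generate G {r, s}) r"
    using assms(6) unfolding type_D_def by blast
  obtain y where y: "y \<in> carrier G" "r = y \<otimes> g \<otimes> inv y" using r unfolding conj_class_def by blast
  obtain z where z: "z \<in> carrier G" "s = z \<otimes> g \<otimes> inv z" using s unfolding conj_class_def by blast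
  have rc: "r \<in> carrier G" "s \<in> carrier G" using y z assms(4) by auto
  let ?H = "generate G {r, s}"
  have sub: "subgroup ?H G" using rc by (intro generate_is_subgroup) auto
  have rsH: "r \<in> ?H" "s \<in> ?H" by (auto intro: generate.incl)
  have "s \<in> conj_class G (carrier G) r"
    unfolding conj_class_def
    using conj_trans_aux[OF assms(1) y(1) z(1) assms(4)] y z
    by (intro CollectI exI[of _ "z \<otimes> inv y"]) auto
  then have "?H \<noteq> carrier G" using nc by auto
  then obtain M where M: "maximal_subgroup M G" "?H \<subseteq> M"
    using exists_maximal[OF assms(1,2) sub] by blast
  have ne2: "?C \<inter> M \<noteq> {}" using r rsH M by auto
  then obtain m where m: "m \<in> M" "?C \<inter> M \<subseteq> conj_class G M m"
    using assms(5) M by blast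
  have "r \<in> conj_class G M m" "s \<in> conj_class G M m" using m r s rsH M by auto
  then have "type_D G (conj_class G M m)" unfolding type_D_def using ne nc by blast
  then show ?thesis using M ne2 m by blast
qed

end
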